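(* Let $\lambda_1,\lambda_2\ge0$ and $\mathbf m\in\mathcal B(\lambda+\rho)_{res}$, and let $i\in\{1,2\}$. If $e_i(A(\mathbf m))\ne0$, then $e_i(\mathbf m)\in\mathcal B(\lambda+\rho)_{res}$ and $A(e_i(\mathbf m))=e_i(A(\mathbf m))$; likewise, if $f_i(A(\mathbf m))\ne0$, then $f_i(\mathbf m)\in\mathcal B(\lambda+\rho)_{res}$ and $A(f_i(\mathbf m))=f_i(A(\mathbf m))$. In particular the image $\mathrm{Arr}(\lambda)=A(\mathcal B(\lambda+\rho)_{res})$ is closed under the operators $e_1,e_2,f_1,f_2$ (wherever they are nonzero).
   Context: For $\mathbf m\in\mathbb Z_{\ge0}^6$ and integers $\lambda_1,\lambda_2\ge0$: $s_1=\lambda_2+m_5+m_6-m_1-m_2-m_3$, $s_2=\lambda_2+m_5+m_6-m_2-2m_3$, $s_3=\lambda_2+m_6-m_3-m_4$, $s_4=\lambda_2+m_6-m_4-m_5$, $s_5=\lambda_2-m_5$, $s_6=\lambda_1-m_6$. $\mathcal B(\lambda+\rho)_{res}$ is the set of $\mathbf m$ with $m_3=m_5$, $s_j\ge-1$ for $j\in\{1,2,5,6\}$, $s_3=s_4\le0$ even; decoration $d(\mathbf m)=-s_3/2$. An array is $\left[\begin{smallmatrix}a&b&c&b&d\\&x&y&z&\\&&k&&\end{smallmatrix}\right]$ with all entries in $\mathbb Z_{\ge0}$ (second entry equal to fourth in the top row); $k$ is its decoration and $a+6b+2c+d$ its weight. Raising operators: $e_1$ sends it to $\left[\begin{smallmatrix}a-1&b&c+1&b&d-1\\&x&y+1&z&\\&&k+1&&\end{smallmatrix}\right]$,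 or to $0$ if $\min\{a,d\}=0$; $e_2$ sends it to $\left[\begin{smallmatrix}a&b-1&c+3&b-1&d\\&x+1&y&z+1&\\&&k+1&&\end{smallmatrix}\right]$, or to $0$ if $b=0$. Lowering operators: $f_1$ sends it to $\left[\begin{smallmatrix}a+1&b&c-1&b&d+1\\&x&y-1&z&\\&&k-1&&\end{smallmatrix}\right]$, or $0$ if $\min\{c,y,k\}=0$; $f_2$ sends it to $\left[\begin{smallmatrix}a&b+1&c-3&b+1&d\\&x-1&y&z-1&\\&&k-1&&\end{smallmatrix}\right]$, or $0$ if $\min\{x,z,k\}=0$ or $c<3$. For $\mathbf m\in\mathcal B(\lambda+\rho)_{res}$, $A(\mathbf m)=\left[\begin{smallmatrix}m_2&m_5&m_4&m_5&m_6\\&s_2+1&s_6+1&s_5+1&\\&&d(\mathbf m)&&\end{smallmatrix}\right]$. On Lusztig data define $e_1(\mathbf m)=(m_1,m_2-1,m_3,m_4+1,m_5,m_6-1)$, $e_2(\mathbf m)=(m_1,m_2,m_3-1,m_4+3,m_5-1,m_6)$, $f_1(\mathbf m)=(m_1,m_2+1,m_3,m_4-1,m_5,m_6+1)$, $f_2(\mathbf m)=(m_1,m_2,m_3+1,m_4-3,m_5+1,m_6)$. *)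

theory Defs
  imports Main
begin

text \<open>Lusztig datum m = (m1,...,m6) in Z^6 (nonnegativity is part of membership in B_res).\<close>
datatype ldat = LD (m1: int) (m2: int) (m3: int) (m4: int) (m5: int) (m6: int)

definition s1 :: "int \<Rightarrow> int \<Rightarrow> ldat \<Rightarrow> int" where
  "s1 l1 l2 m = l2 + m5 m + m6 m - m1 m - m2 m - m3 m"
definition s2 :: "int \<Rightarrow> int \<Rightarrow> ldat \<Rightarrow> int" where
  "s2 l1 l2 m = l2 + m5 m + m6 m - m2 m - 2 * m3 m"
definition s3 :: "int \<Rightarrow> int \<Rightarrow> ldat \<Rightarrow> int" where
  "s3 l1 l2 m = l2 + m6 m - m3 m - m4 m"
definition s4 :: "int \<Rightarrow> int \<Rightarrow> ldat \<Rightarrow> int" where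
  "s4 l1 l2 m = l2 + m6 m - m4 m - m5 m"
definition s5 :: "int \<Rightarrow> int \<Rightarrow> ldat \<Rightarrow> int" where
  "s5 l1 l2 m = l2 - m5 m"
definition s6 :: "int \<Rightarrow> int \<Rightarrow> ldat \<Rightarrow> int" where
  "s6 l1 l2 m = l1 - m6 m"

definition Bres :: "int \<Rightarrow> int \<Rightarrow> ldat set" where
  "Bres l1 l2 = {m. m1 m \<ge> 0 \<and> m2 m \<ge> 0 \<and> m3 m \<ge> 0 \<and> m4 m \<ge> 0 \<and> m5 m \<ge> 0 \<and> m6 m \<ge> 0
      \<and> m3 m = m5 m
      \<and> s1 l1 l2 m \<ge> -1 \<and> s2 l1 l2 m \<ge> -1 \<and> s5 l1 l2 m \<ge> -1 \<and> s6 l1 l2 m \<ge> -1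
      \<and> s3 l1 l2 m = s4 l1 l2 m \<and> s3 l1 l2 m \<le> 0 \<and> even (s3 l1 l2 m)}"

text \<open>Decoration d(m) = -s3/2 (s3 is even on B_res).\<close>
definition deco :: "int \<Rightarrow> int \<Rightarrow> ldat \<Rightarrow> int" where
  "deco l1 l2 m = (- s3 l1 l2 m) div 2"

text \<open>Array [a b c b d; x y z; k]: fields a b c d x y z k (second top entry = fourth = b).\<close>
datatype arr = Ar (ta: int) (tb: int) (tc: int) (td: int) (mx: int) (my: int) (mz: int) (dk: int)

definition arr_weight :: "arr \<Rightarrow> int" where
  "arr_weight X = ta X + 6 * tb X + 2 * tc X + td X"

text \<open>Raising/lowering operators on arrays; None represents 0.\<close>
definition eA :: "nat \<Rightarrow> arr \<Rightarrow> arr option" where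
  "eA i X = (case X of Ar a b c d x y z k \<Rightarrow>
     if i = 1 then (if min a d = 0 then None else Some (Ar (a-1) b (c+1) (d-1) x (y+1) z (k+1)))
     else if i = 2 then (if b = 0 then None else Some (Ar a (b-1) (c+3) d (x+1) y (z+1) (k+1)))
     else None)"

definition fA :: "nat \<Rightarrow> arr \<Rightarrow> arr option" where
  "fA i X = (case X of Ar a b c d x y z k \<Rightarrow>
     if i = 1 then (if min c (min y k) = 0 then None else Some (Ar (a+1) b (c-1) (d+1) x (y-1) z (k-1)))
     else if i = 2 then (if min x (min z k) = 0 \<or> c < 3 then None
                         else Some (Ar a (b+1) (c-3) d (x-1) y (z-1) (k-1)))
     else None)"

definition Amap :: "int \<Rightarrow> int \<Rightarrow> ldat \<Rightarrow> arr" where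
  "Amap l1 l2 m = Ar (m2 m) (m5 m) (m4 m) (m6 m)
      (s2 l1 l2 m + 1) (s6 l1 l2 m + 1) (s5 l1 l2 m + 1) (deco l1 l2 m)"

definition eL :: "nat \<Rightarrow> ldat \<Rightarrow> ldat" where
  "eL i m = (case m of LD a b c d e f \<Rightarrow>
     if i = 1 then LD a (b-1) c (d+1) e (f-1) else LD a b (c-1) (d+3) (e-1) f)"

definition fL :: "nat \<Rightarrow> ldat \<Rightarrow> ldat" where
  "fL i m = (case m of LD a b c d e f \<Rightarrow>
     if i = 1 then LD a (b+1) c (d-1) e (f+1) else LD a b (c+1) (d-3) (e+1) f)"

end

theory Submission
  imports Defs
begin

lemma Bmem: "LD a b c d e f \<in> Bres l1 l2 \<longleftrightarrow> (0 \<le> a \<and> 0 \<le> b \<and> 0 \<le> c \<and> 0 \<le> d \<and> 0 \<le> e \<and> 0 \<le> f \<and> c = e \<and>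
    l2 + e + f - a - b - c \<ge> -1 \<and> l2 + e + f - b - 2*c \<ge> -1 \<and> l2 - e \<ge> -1 \<and> l1 - f \<ge> -1 \<and>
    l2 + f - c - d = l2 + f - d - e \<and> l2 + f - c - d \<le> 0 \<and> even (l2 + f - c - d))"
  unfolding Bres_def s1_def s2_def s3_def s4_def s5_def s6_def by auto

lemma AL: "Amap l1 l2 (LD a b c d e f) = Ar b e d f (l2 + e + f - b - 2*c + 1) (l1 - f + 1) (l2 - e + 1) ((-(l2 + f - c - d)) div 2)"
  by (simp add: Amap_def s2_def s5_def s6_def deco_def s3_def)

lemma e1:
  assumes "LD a b c d e f \<in> Bres l1 l2" "b \<noteq> 0" "f \<noteq> 0"
  shows "LD a (b-1) c (d+1) e (f-1) \<in> Bres l1 l2"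
    "Amap l1 l2 (LD a (b-1) c (d+1) e (f-1)) = Ar (b-1) e (d+1) (f-1) (l2 + e + f - b - 2*c + 1) (l1 - f + 1 + 1) (l2 - e + 1) ((-(l2 + f - c - d)) div 2 + 1)"
proof -
  note B = assms(1)[unfolded Bmem]
  have ev: "even (l2 + (f - 1) - c - (d + 1))" using B by presburger
  show "LD a (b-1) c (d+1) e (f-1) \<in> Bres l1 l2" unfolding Bmem using B ev assms(2,3) by auto
  have "(-(l2 + (f - 1) - c - (d+1))) div 2 = (-(l2 + f - c - d)) div 2 + 1" by presburger
  then show "Amap l1 l2 (LD a (b-1) c (d+1) e (f-1)) = Ar (b-1) e (d+1) (f-1) (l2 + e + f - b - 2*c + 1) (l1 - f + 1 + 1) (l2 - e + 1) ((-(l2 + f - c - d)) div 2 + 1)"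
    unfolding AL by simp
qed

lemma e2:
  assumes "LD a b c d e f \<in> Bres l1 l2" "e \<noteq> 0"
  shows "LD a b (c-1) (d+3) (e-1) f \<in> Bres l1 l2"
    "Amap l1 l2 (LD a b (c-1) (d+3) (e-1) f) = Ar b (e-1) (d+3) f (l2 + e + f - b - 2*c + 1 + 1) (l1 - f + 1) (l2 - e + 1 + 1) ((-(l2 + f - c - d)) div 2 + 1)"
proof -
  note B = assms(1)[unfolded Bmem]
  have ev: "even (l2 + f - (c - 1) - (d + 3))" using B by presburger
  show "LD a b (c-1) (d+3) (e-1) f \<in> Bres l1 l2" unfolding Bmem using B ev assms(2) by auto
  have "(-(l2 + f - (c - 1) - (d+3))) div 2 = (-(l2 + f - c - d)) div 2 + 1" by presburger
  then show "Amap l1 l2 (LD a b (c-1) (d+3) (e-1) f) = Ar b (e-1) (d+3) f (l2 + e + f - b - 2*c + 1 + 1) (l1 - f + 1) (l2 - e + 1 + 1) ((-(l2 + f - c - d)) div 2 + 1)"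
    unfolding AL by simp
qed

lemma f1:
  assumes "LD a b c d e f \<in> Bres l1 l2" "d \<noteq> 0" "l1 - f + 1 \<noteq> 0" "(-(l2 + f - c - d)) div 2 \<noteq> 0"
  shows "LD a (b+1) c (d-1) e (f+1) \<in> Bres l1 l2"
    "Amap l1 l2 (LD a (b+1) c (d-1) e (f+1)) = Ar (b+1) e (d-1) (f+1) (l2 + e + f - b - 2*c + 1) (l1 - f + 1 - 1) (l2 - e + 1) ((-(l2 + f - c - d)) div 2 - 1)"
proof -
  note B = assms(1)[unfolded Bmem]
  have k: "l2 + f - c - d \<le> -2" using B assms(4) by presburger
  have ev: "even (l2 + (f + 1) - c - (d - 1))" using B by presburger
  show "LD a (b+1) c (d-1) e (f+1) \<in> Bres l1 l2" unfolding Bmem using B ev k assms(2,3) by auto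
  have "(-(l2 + (f + 1) - c - (d-1))) div 2 = (-(l2 + f - c - d)) div 2 - 1" by presburger
  then show "Amap l1 l2 (LD a (b+1) c (d-1) e (f+1)) = Ar (b+1) e (d-1) (f+1) (l2 + e + f - b - 2*c + 1) (l1 - f + 1 - 1) (l2 - e + 1) ((-(l2 + f - c - d)) div 2 - 1)"
    unfolding AL by simp
qed

lemma f2:
  assumes "LD a b c d e f \<in> Bres l1 l2" "d \<ge> 3" "l2 + e + f - b - 2*c + 1 \<noteq> 0" "l2 - e + 1 \<noteq> 0" "(-(l2 + f - c - d)) div 2 \<noteq> 0"
  shows "LD a b (c+1) (d-3) (e+1) f \<in> Bres l1 l2"
    "Amap l1 l2 (LD a b (c+1) (d-3) (e+1) f) = Ar b (e+1) (d-3) f (l2 + e + f - b - 2*c + 1 - 1) (l1 - f + 1) (l2 - e + 1 - 1) ((-(l2 + f - c - d)) div 2 - 1)"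
proof -
  note B = assms(1)[unfolded Bmem]
  have k: "l2 + f - c - d \<le> -2" using B assms(5) by presburger
  have ev: "even (l2 + f - (c + 1) - (d - 3))" using B by presburger
  show "LD a b (c+1) (d-3) (e+1) f \<in> Bres l1 l2" unfolding Bmem using B ev k assms(2,3,4) by auto
  have "(-(l2 + f - (c+1) - (d-3))) div 2 = (-(l2 + f - c - d)) div 2 - 1" by presburger
  then show "Amap l1 l2 (LD a b (c+1) (d-3) (e+1) f) = Ar b (e+1) (d-3) f (l2 + e + f - b - 2*c + 1 - 1) (l1 - f + 1) (l2 - e + 1 - 1) ((-(l2 + f - c - d)) div 2 - 1)"
    unfolding AL by simp
qed

lemma part:
  fixes l1 l2 :: int and m :: ldat and i :: nat
  assumes "l1 \<ge> 0" and "l2 \<ge> 0" and "m \<in> Bres l1 l2" and "i \<in> {1, 2}"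
  shows "(eA i (Amap l1 l2 m) \<noteq> None \<longrightarrow>
            eL i m \<in> Bres l1 l2 \<and> eA i (Amap l1 l2 m) = Some (Amap l1 l2 (eL i m)))
       \<and> (fA i (Amap l1 l2 m) \<noteq> None \<longrightarrow>
            fL i m \<in> Bres l1 l2 \<and> fA i (Amap l1 l2 m) = Some (Amap l1 l2 (fL i m)))"
proof -
  obtain a b c d e f where M: "m = LD a b c d e f" by (cases m)
  have Bm: "LD a b c d e f \<in> Bres l1 l2" using assms(3) M by simp
  note B = Bm[unfolded Bmem]
  define D where "D = (-(l2 + f - c - d)) div 2"
  have D0: "D \<ge> 0" using B unfolding D_def by simp
  have y0: "l1 - f + 1 \<ge> 0" "l2 - e + 1 \<ge> 0" "l2 + e + f - b - 2*c + 1 \<ge> 0" using B by auto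
  have AM: "Amap l1 l2 m = Ar b e d f (l2 + e + f - b - 2*c + 1) (l1 - f + 1) (l2 - e + 1) D"
    unfolding M AL D_def ..
  have mn: "\<And>x y z::int. 0 \<le> x \<Longrightarrow> 0 \<le> y \<Longrightarrow> 0 \<le> z \<Longrightarrow> (min x (min y z) = 0) = (x = 0 \<or> y = 0 \<or> z = 0)"
    "\<And>x y ::int. 0 \<le> x \<Longrightarrow> 0 \<le> y \<Longrightarrow> (min x y = 0) = (x = 0 \<or> y = 0)"
    by (auto simp: min_def)
  consider "i = 1" | "i = 2" using assms(4) by auto
  then show ?thesis
  proof cases
    case 1
    have eLm: "eL i m = LD a (b-1) c (d+1) e (f-1)" "fL i m = LD a (b+1) c (d-1) e (f+1)"
      using 1 by (simp_all add: M eL_def fL_def)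
    have eAm: "eA i (Amap l1 l2 m) = (if b = 0 \<or> f = 0 then None else
        Some (Ar (b-1) e (d+1) (f-1) (l2 + e + f - b - 2*c + 1) (l1 - f + 1 + 1) (l2 - e + 1) (D + 1)))"
      using 1 B mn(2)[of b f] by (simp add: AM eA_def)
    have fAm: "fA i (Amap l1 l2 m) = (if d = 0 \<or> l1 - f + 1 = 0 \<or> D = 0 then None else
        Some (Ar (b+1) e (d-1) (f+1) (l2 + e + f - b - 2*c + 1) (l1 - f + 1 - 1) (l2 - e + 1) (D - 1)))"
      using 1 B y0 D0 mn(1)[of d "l1 - f + 1" D] by (simp add: AM fA_def)
    show ?thesis using e1[OF Bm] f1[OF Bm] unfolding eLm eAm fAm D_def by auto
  next
    case 2
    have eLm: "eL i m = LD a b (c-1) (d+3) (e-1) f" "fL i m = LD a b (c+1) (d-3) (e+1) f"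
      using 2 by (simp_all add: M eL_def fL_def)
    have eAm: "eA i (Amap l1 l2 m) = (if e = 0 then None else
        Some (Ar b (e-1) (d+3) f (l2 + e + f - b - 2*c + 1 + 1) (l1 - f + 1) (l2 - e + 1 + 1) (D + 1)))"
      using 2 by (simp add: AM eA_def)
    have fAm: "fA i (Amap l1 l2 m) = (if l2 + e + f - b - 2*c + 1 = 0 \<or> l2 - e + 1 = 0 \<or> D = 0 \<or> d < 3 then None else
        Some (Ar b (e+1) (d-3) f (l2 + e + f - b - 2*c + 1 - 1) (l1 - f + 1) (l2 - e + 1 - 1) (D - 1)))"
      using 2 B y0 D0 mn(1)[of "l2 + e + f - b - 2*c + 1" "l2 - e + 1" D] by (simp add: AM fA_def)
    show ?thesis using e2[OF Bm] f2[OF Bm] unfolding eLm eAm fAm D_def by auto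
  qed
qed

theorem mainTheorem7:
  fixes l1 l2 :: int and m :: ldat and i :: nat
  assumes "l1 \<ge> 0" and "l2 \<ge> 0" and "m \<in> Bres l1 l2" and "i \<in> {1, 2}"
  shows "(eA i (Amap l1 l2 m) \<noteq> None \<longrightarrow>
            eL i m \<in> Bres l1 l2 \<and> eA i (Amap l1 l2 m) = Some (Amap l1 l2 (eL i m)))
       \<and> (fA i (Amap l1 l2 m) \<noteq> None \<longrightarrow>
            fL i m \<in> Bres l1 l2 \<and> fA i (Amap l1 l2 m) = Some (Amap l1 l2 (fL i m)))
       \<and> (\<forall>X \<in> Amap l1 l2 ` Bres l1 l2. \<forall>j \<in> {1::nat, 2}. \<forall>Y.
            (eA j X = Some Y \<longrightarrow> Y \<in> Amap l1 l2 ` Bres l1 l2)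
          \<and> (fA j X = Some Y \<longrightarrow> Y \<in> Amap l1 l2 ` Bres l1 l2))"
proof -
  have A: "\<forall>X \<in> Amap l1 l2 ` Bres l1 l2. \<forall>j \<in> {1::nat, 2}. \<forall>Y.
            (eA j X = Some Y \<longrightarrow> Y \<in> Amap l1 l2 ` Bres l1 l2)
          \<and> (fA j X = Some Y \<longrightarrow> Y \<in> Amap l1 l2 ` Bres l1 l2)"
  proof (intro ballI allI conjI impI)
    fix X j Y assume X: "X \<in> Amap l1 l2 ` Bres l1 l2" and j: "j \<in> {1::nat,2}"
    from X obtain n where n: "n \<in> Bres l1 l2" "X = Amap l1 l2 n" by blast
    note P = part[OF assms(1,2) n(1) j]
    { assume "eA j X = Some Y" thus "Y \<in> Amap l1 l2 ` Bres l1 l2" using P n by auto }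
    { assume "fA j X = Some Y" thus "Y \<in> Amap l1 l2 ` Bres l1 l2" using P n by auto }
  qed
  show ?thesis using part[OF assms] A by blast
qed

end
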